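(* For every $m\in\mathbb{N}$ the set $$X_m:=\left\{\sum_{i=1}^m\frac{d_i}{2^{i}}:\ d_{i}\in\{0\}\cup \{t_{k,n}:k\ge0,n\ge1\}\right\}$$ is nowhere dense in $\mathbb{R}$.
   Context: For $k\ge 0$ and $n\ge 1$, $t_{k,n}:=\frac{1}{2^k n}$. *)

theory Defs
  imports "HOL-Analysis.Analysis"
begin

definition t :: "nat \<Rightarrow> nat \<Rightarrow> real" where
  "t k n = 1 / (2 ^ k * real n)"

definition digits :: "real set" where
  "digits = {0} \<union> {t k n | k n. n \<ge> 1}"

definition X :: "nat \<Rightarrow> real set" where
  "X m = {(\<Sum>i=1..m. d i / 2 ^ i) | d. \<forall>i\<in>{1..m}. d i \<in> digits}"

definition nowhere_dense :: "'a::topological_space set \<Rightarrow> bool" where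
  "nowhere_dense S \<longleftrightarrow> interior (closure S) = {}"

end

theory Submission
  imports Defs
begin

lemma digits_eq: "digits = insert 0 (range (\<lambda>n. inverse (real (Suc n))))"
proof -
  have "{t k n | k n. n \<ge> 1} = range (\<lambda>n. inverse (real (Suc n)))"
  proof
    show "{t k n | k n. n \<ge> 1} \<subseteq> range (\<lambda>n. inverse (real (Suc n)))"
    proof
      fix x assume "x \<in> {t k n | k n. n \<ge> 1}"
      then obtain k n where x: "x = t k n" "n \<ge> 1" by blast
      have "2 ^ k * n \<ge> (1::nat)" using x(2) by simp
      then have "x = inverse (real (Suc (2^k*n - 1)))"
        using x by (simp add: t_def field_simps of_nat_diff)
      then show "x \<in> range (\<lambda>n. inverse (real (Suc n)))" by blast
    qed
    show "range (\<lambda>n. inverse (real (Suc n))) \<subseteq> {t k n | k n. n \<ge> 1}"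
    proof
      fix x assume "x \<in> range (\<lambda>n. inverse (real (Suc n)))"
      then obtain n where "x = inverse (real (Suc n))" by blast
      then have "x = t 0 (Suc n)" by (simp add: t_def field_simps)
      then show "x \<in> {t k n | k n. n \<ge> 1}" by (intro CollectI exI[of _ 0] exI[of _ "Suc n"]) simp
    qed
  qed
  then show ?thesis unfolding digits_def by auto
qed

lemma digits_compact: "compact digits"
  unfolding digits_eq by (rule compact_sequence_with_limit[OF LIMSEQ_inverse_real_of_nat])

lemma digits_countable: "countable digits"
  unfolding digits_eq by simp

lemma X0: "X 0 = {0}"
  unfolding X_def by auto

lemma XSuc: "X (Suc m) = (\<lambda>(x,y). x + y / 2 ^ Suc m) ` (X m \<times> digits)"
proof
  show "X (Suc m) \<subseteq> (\<lambda>(x,y). x + y / 2 ^ Suc m) ` (X m \<times> digits)"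
  proof
    fix z assume "z \<in> X (Suc m)"
    then obtain d where z: "z = (\<Sum>i=1..Suc m. d i / 2 ^ i)" and d: "\<forall>i\<in>{1..Suc m}. d i \<in> digits"
      unfolding X_def by blast
    have "(\<Sum>i=1..m. d i / 2 ^ i) \<in> X m" using d unfolding X_def by auto
    moreover have "d (Suc m) \<in> digits" using d by auto
    moreover have "z = (\<Sum>i=1..m. d i / 2 ^ i) + d (Suc m) / 2 ^ Suc m"
      using z by (simp add: sum.cl_ivl_Suc)
    ultimately show "z \<in> (\<lambda>(x,y). x + y / 2 ^ Suc m) ` (X m \<times> digits)"
      by force
  qed
  show "(\<lambda>(x,y). x + y / 2 ^ Suc m) ` (X m \<times> digits) \<subseteq> X (Suc m)"
  proof
    fix z assume "z \<in> (\<lambda>(x,y). x + y / 2 ^ Suc m) ` (X m \<times> digits)"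
    then obtain x y where z: "z = x + y / 2 ^ Suc m" and x: "x \<in> X m" and y: "y \<in> digits" by auto
    from x obtain d where xd: "x = (\<Sum>i=1..m. d i / 2 ^ i)" and d: "\<forall>i\<in>{1..m}. d i \<in> digits"
      unfolding X_def by blast
    define d' where "d' = d(Suc m := y)"
    have "(\<Sum>i=1..m. d' i / 2 ^ i) = x" unfolding xd d'_def by (intro sum.cong) auto
    then have "z = (\<Sum>i=1..Suc m. d' i / 2 ^ i)" using z by (simp add: sum.cl_ivl_Suc d'_def)
    moreover have "\<forall>i\<in>{1..Suc m}. d' i \<in> digits" using d y unfolding d'_def
      by (auto simp: le_Suc_eq)
    ultimately show "z \<in> X (Suc m)" unfolding X_def by blast
  qed
qed

lemma X_props: "compact (X m) \<and> countable (X m)"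
proof (induction m)
  case 0 then show ?case by (simp add: X0)
next
  case (Suc m)
  have c: "continuous_on (X m \<times> digits) (\<lambda>(x,y). x + y / 2 ^ Suc m)"
    unfolding case_prod_unfold by (intro continuous_intros) auto
  have "compact (X m \<times> digits)" using Suc digits_compact by (simp add: compact_Times)
  then have "compact ((\<lambda>(x,y). x + y / 2 ^ Suc m) ` (X m \<times> digits))"
    by (rule compact_continuous_image[OF c])
  moreover have "countable ((\<lambda>(x,y). x + y / 2 ^ Suc m) ` (X m \<times> digits))"
    using Suc digits_countable by (intro countable_image) simp
  ultimately show ?case unfolding XSuc by blast
qed

theorem lemma2p2:
  fixes m :: nat
  shows "nowhere_dense (X m)"
proof -
  have cl: "closure (X m) = X m" using X_props compact_imp_closed closure_closed by blast
  have "interior (X m) = {}"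
  proof (rule ccontr)
    assume "interior (X m) \<noteq> {}"
    then obtain x where "x \<in> interior (X m)" by blast
    then obtain e where "e > 0" "ball x e \<subseteq> X m"
      by (meson mem_interior)
    then show False using X_props countable_subset uncountable_ball by metis
  qed
  then show ?thesis unfolding nowhere_dense_def cl .
qed

end
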